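(* Let $l\in\mathbb{N}$ and $k_1,\dots,k_l\in\mathbb{N}$ with $k_j\mid k_{j-1}$ for $j=2,\dots,l$. Let $M\subset\mathbb{N}$ be the finite set with $\Lambda_{k_1}-\Lambda_{k_2}+\dots+(-1)^{l-1}\Lambda_{k_l}=\sum_{m\in M}\Psi_m$. Then $M$ is either empty, or it satisfies both of the following: (1) $M$ contains a largest number $m_1$, and $\mathcal{G}(M)$ is a directed graph with root $m_1$, i.e. every vertex of $\mathcal{G}(M)$ can be reached from $m_1$ by a directed path; (2) there is a directed path in $\mathcal{G}(M)$ consisting only of $2$-edges which contains a vertex of every $2$-plane of $\mathcal{G}(M)$.
   Context: $\mathbb{Q}\langle S^{UR}\rangle$ is the group ring over $\mathbb{Q}$ of the group of roots of unity, with elements $\sum b_j\langle\zeta_j\rangle$; $\Lambda_m=\sum_{a=0}^{m-1}\langle e^{2\pi i a/m}\rangle$ and $\Psi_m=\sum_{\zeta\text{ of order }m}\langle\zeta\rangle$, so $\Lambda_k=\sum_{m\mid k}\Psi_m$. For a finite set $M\subset\mathbb{N}$ the directed graph $\mathcal{G}(M)$ has vertex set $M$, and there is a directed edge from $m_1\in M$ to $m_2\in M$ iff $m_1/m_2=p^e$ for some prime $p$ and some $e\ge1$ and there is no $m_3\in M\setminus\{m_1,m_2\}$ with $m_2\mid m_3\mid m_1$; such an edge is labelled $p$ and called a $p$-edge. For a prime $p$, the $p$-planes of $\mathcal{G}(M)$ are the connected components of the graph obtained from $\mathcal{G}(M)$ by deleting all $p$-edges. *)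

theory Defs
  imports "HOL-Analysis.Analysis"
begin

text \<open>Elements of the group ring Q<S^UR> are modelled as finitely supported
  functions from complex numbers (supported on roots of unity) to rationals;
  the element sum b_j <zeta_j> is the function sending zeta_j to b_j.\<close>

definition grp_elem :: "complex \<Rightarrow> complex \<Rightarrow> rat" where
  "grp_elem \<zeta> = (\<lambda>z. if z = \<zeta> then 1 else 0)"

definition Lambda :: "nat \<Rightarrow> complex \<Rightarrow> rat" where
  "Lambda m = (\<lambda>z. \<Sum>a<m. grp_elem (exp (2 * pi * \<i> * of_nat a / of_nat m)) z)"

definition has_order :: "complex \<Rightarrow> nat \<Rightarrow> bool" where
  "has_order z m \<longleftrightarrow> 0 < m \<and> z ^ m = 1 \<and> (\<forall>d. 0 < d \<and> d < m \<longrightarrow> z ^ d \<noteq> 1)"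

definition Psi :: "nat \<Rightarrow> complex \<Rightarrow> rat" where
  "Psi m = (\<lambda>z. if has_order z m then 1 else 0)"

definition pedge :: "nat set \<Rightarrow> nat \<Rightarrow> nat \<Rightarrow> nat \<Rightarrow> bool" where
  "pedge M p m1 m2 \<longleftrightarrow> m1 \<in> M \<and> m2 \<in> M \<and> prime p \<and>
     (\<exists>e\<ge>1. m1 = m2 * p ^ e) \<and>
     \<not> (\<exists>m3 \<in> M - {m1, m2}. m2 dvd m3 \<and> m3 dvd m1)"

definition edge :: "nat set \<Rightarrow> nat \<Rightarrow> nat \<Rightarrow> bool" where
  "edge M m1 m2 \<longleftrightarrow> (\<exists>p. pedge M p m1 m2)"

definition non_p_edge :: "nat set \<Rightarrow> nat \<Rightarrow> nat \<Rightarrow> nat \<Rightarrow> bool" where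
  "non_p_edge M p a b \<longleftrightarrow> edge M a b \<and> \<not> pedge M p a b"

text \<open>Vertices a, b in M are in the same p-plane: connected (ignoring direction)
  in G(M) with all p-edges deleted.\<close>
definition same_plane :: "nat set \<Rightarrow> nat \<Rightarrow> nat \<Rightarrow> nat \<Rightarrow> bool" where
  "same_plane M p a b \<longleftrightarrow> a \<in> M \<and> b \<in> M \<and>
     (\<lambda>x y. non_p_edge M p x y \<or> non_p_edge M p y x)\<^sup>*\<^sup>* a b"

definition planes :: "nat set \<Rightarrow> nat \<Rightarrow> nat set set" where
  "planes M p = {{b. same_plane M p a b} | a. a \<in> M}"

definition p_path :: "nat set \<Rightarrow> nat \<Rightarrow> nat list \<Rightarrow> bool" where
  "p_path M p xs \<longleftrightarrow> xs \<noteq> [] \<and> set xs \<subseteq> M \<and>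
     (\<forall>i. Suc i < length xs \<longrightarrow> pedge M p (xs ! i) (xs ! Suc i))"

end

theory Submission
  imports Defs "HOL-Computational_Algebra.Primes"
begin

definition Jset :: "nat \<Rightarrow> (nat \<Rightarrow> nat) \<Rightarrow> nat \<Rightarrow> nat set" where
  "Jset l k x = {j\<in>{1..l}. x dvd k j}"

lemma mult_dvd_iff:
  fixes x y :: nat
  assumes "x > 0" "y > 0"
  shows "x dvd y \<longleftrightarrow> (\<forall>r. prime r \<longrightarrow> multiplicity r x \<le> multiplicity r y)"
  using assms by (auto intro: dvd_imp_multiplicity_le multiplicity_le_imp_dvd)

lemma mult_times_pow:
  fixes v p r e :: nat
  assumes "v > 0" "prime p" "prime r"
  shows "multiplicity r (v * p ^ e) = multiplicity r v + (if r = p then e else 0)"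
proof -
  have "multiplicity r (v * p ^ e) = multiplicity r v + multiplicity r (p ^ e)"
    using assms by (intro prime_elem_multiplicity_mult_distrib) (auto simp: prime_gt_0_nat)
  also have "multiplicity r (p ^ e) = (if r = p then e else 0)"
    using assms by (auto simp: multiplicity_distinct_prime_power)
  finally show ?thesis .
qed

lemma mult_q_times_pow:
  fixes v p q e :: nat
  assumes "v > 0" "prime p" "q = 1 \<or> prime q" "p \<noteq> q"
  shows "multiplicity q (v * p ^ e) = multiplicity q v"
  using assms mult_times_pow[of v p q e] by (auto simp: multiplicity_unit_left)

lemma ppow_gt1: "prime (p::nat) \<Longrightarrow> 1 \<le> e \<Longrightarrow> 1 < p ^ e"
  using one_less_power[of p e] prime_gt_1_nat[of p] by simp

lemma edge_exists:
  fixes M :: "nat set"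
  assumes fin: "finite M" and vM: "v \<in> M" and uM: "u \<in> M" and vpos: "v > 0"
    and p: "prime p" and e: "1 \<le> e" and u: "u = v * p ^ e"
  shows "\<exists>w f. w \<in> M \<and> 1 \<le> f \<and> w = v * p ^ f \<and> pedge M p w v"
proof -
  define S where "S = {w\<in>M. v dvd w \<and> w dvd u \<and> w \<noteq> v}"
  have "1 < p ^ e" using p e by (rule ppow_gt1)
  then have "v < u" unfolding u using vpos by simp
  then have "u \<noteq> v" by simp
  then have uS: "u \<in> S" using uM u by (simp add: S_def)
  have finS: "finite S" using fin by (simp add: S_def)
  define w where "w = Min S"
  have wS: "w \<in> S" unfolding w_def using uS finS by (metis Min_in empty_iff)
  have wmin: "\<And>y. y \<in> S \<Longrightarrow> w \<le> y" using finS by (simp add: w_def)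
  obtain d where d: "w = v * d" using wS by (auto simp: S_def)
  have "d dvd p ^ e" using wS d u vpos by (auto simp: S_def)
  then obtain f where f: "f \<le> e" "d = p ^ f" using divides_primepow_nat[OF p] by blast
  have f1: "1 \<le> f" using wS d f by (cases f) (auto simp: S_def)
  have upos: "u > 0" using u vpos p by (simp add: prime_gt_0_nat)
  have "pedge M p w v"
    unfolding pedge_def
  proof (intro conjI)
    show "w \<in> M" "v \<in> M" "prime p" using wS vM p by (auto simp: S_def)
    show "\<exists>e\<ge>1. w = v * p ^ e" using f1 d f by blast
    show "\<not> (\<exists>m3\<in>M - {w, v}. v dvd m3 \<and> m3 dvd w)"
    proof
      assume "\<exists>m3\<in>M - {w, v}. v dvd m3 \<and> m3 dvd w"
      then obtain m3 where m3: "m3 \<in> M" "m3 \<noteq> w" "m3 \<noteq> v" "v dvd m3" "m3 dvd w" by blast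
      have "w dvd u" using wS by (simp add: S_def)
      then have "m3 dvd u" using m3(5) by (rule dvd_trans[rotated])
      then have "m3 \<in> S" using m3 by (simp add: S_def)
      then have "w \<le> m3" by (rule wmin)
      moreover have "w > 0" using wS upos by (auto simp: S_def intro: dvd_pos_nat)
      then have "m3 \<le> w" using m3(5) by (simp add: dvd_imp_le)
      ultimately show False using m3(2) by simp
    qed
  qed
  then show ?thesis using f1 d f wS by (auto simp: S_def)
qed

lemma sorted_gap:
  fixes xs :: "nat list"
  assumes "sorted_wrt (>) xs" "Suc i < length xs" "z \<in> set xs" "xs ! Suc i < z" "z < xs ! i"
  shows False
proof -
  obtain j where j: "j < length xs" "z = xs ! j" using assms(3) by (metis in_set_conv_nth)
  show False
  proof (cases "j \<le> i")
    case True
    then have "xs ! i \<le> xs ! j" using sorted_wrt_nth_less[OF assms(1), of j i] assms(2) j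
      by (cases "j = i") auto
    then show False using assms(5) j by simp
  next
    case False
    then have "xs ! j \<le> xs ! Suc i" using sorted_wrt_nth_less[OF assms(1), of "Suc i" j] assms(2) j
      by (cases "j = Suc i") auto
    then show False using assms(4) j by simp
  qed
qed

lemma R_non2:
  assumes "prime p" "p \<noteq> 2" "pedge M p x y" "\<forall>m\<in>M. 0 < m"
  shows "non_p_edge M 2 x y"
  unfolding non_p_edge_def
proof
  show "edge M x y" using assms(3) by (auto simp: edge_def)
  show "\<not> pedge M 2 x y"
  proof
    assume "pedge M 2 x y"
    then obtain e where e: "1 \<le> e" "x = y * 2 ^ e" by (auto simp: pedge_def)
    obtain f where f: "1 \<le> f" "x = y * p ^ f" using assms(3) by (auto simp: pedge_def)
    have "y > 0" using assms(3,4) by (auto simp: pedge_def)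
    then have "2 ^ e = p ^ f" using e f by simp
    moreover have "(2::nat) dvd 2 ^ e" using e by (simp add: dvd_power)
    ultimately have "2 dvd p ^ f" by simp
    then have "2 dvd p" using prime_dvd_power[of 2 p f] by simp
    then show False using assms(1,2) by (metis primes_dvd_imp_eq two_is_prime_nat)
  qed
qed

lemma rtranclp_sym:
  assumes "\<And>a b. U a b \<Longrightarrow> U b a" "U\<^sup>*\<^sup>* x y"
  shows "U\<^sup>*\<^sup>* y x"
  using assms(2)
proof (induction rule: rtranclp_induct)
  case base then show ?case by simp
next
  case (step y z)
  then show ?case using assms(1) by (meson converse_rtranclp_into_rtranclp)
qed

locale kchain =
  fixes l :: nat and k :: "nat \<Rightarrow> nat" and M :: "nat set"
  assumes kpos: "\<forall>j\<in>{1..l}. 0 < k j"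
    and kdvd: "\<forall>j\<in>{2..l}. k j dvd k (j - 1)"
    and Mdef: "M = {x. 0 < x \<and> odd (card (Jset l k x))}"
begin

lemma chain_dvd: "1 \<le> i \<Longrightarrow> i \<le> j \<Longrightarrow> j \<le> l \<Longrightarrow> k j dvd k i"
proof (induction j)
  case 0 then show ?case by simp
next
  case (Suc j)
  show ?case
  proof (cases "i = Suc j")
    case True then show ?thesis by simp
  next
    case False
    then have "i \<le> j" using Suc by simp
    then have "k j dvd k i" using Suc by simp
    moreover have "Suc j \<in> {2..l}" using Suc.prems \<open>i \<le> j\<close> by auto
    then have "k (Suc j) dvd k j" using kdvd by fastforce
    ultimately show ?thesis by (rule dvd_trans[rotated])
  qed
qed

lemma J_seg: "Jset l k x = {1..card (Jset l k x)}" and J_le: "card (Jset l k x) \<le> l"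
proof -
  have fin: "finite (Jset l k x)" by (simp add: Jset_def)
  have sub: "Jset l k x \<subseteq> {1..l}" by (auto simp: Jset_def)
  have "\<exists>t. Jset l k x = {1..t} \<and> t \<le> l"
  proof (cases "Jset l k x = {}")
    case True then show ?thesis by (intro exI[of _ 0]) auto
  next
    case False
    define t where "t = Max (Jset l k x)"
    have tin: "t \<in> Jset l k x" using False fin by (simp add: t_def)
    have "Jset l k x = {1..t}"
    proof
      show "Jset l k x \<subseteq> {1..t}" using fin sub by (auto simp: t_def)
      show "{1..t} \<subseteq> Jset l k x"
      proof
        fix i assume "i \<in> {1..t}"
        moreover have "t \<le> l" "x dvd k t" using tin by (auto simp: Jset_def)
        ultimately show "i \<in> Jset l k x"
          using chain_dvd[of i t] dvd_trans[of x "k t" "k i"] by (auto simp: Jset_def)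
      qed
    qed
    moreover have "t \<le> l" using tin by (simp add: Jset_def)
    ultimately show ?thesis by blast
  qed
  then obtain t where "Jset l k x = {1..t}" "t \<le> l" by blast
  then show "Jset l k x = {1..card (Jset l k x)}" "card (Jset l k x) \<le> l" by auto
qed

lemma J_mem: "j \<in> Jset l k x \<longleftrightarrow> 1 \<le> j \<and> j \<le> card (Jset l k x)"
  using J_seg[of x] by (metis atLeastAtMost_iff)

lemma J_dvd: "j \<in> Jset l k x \<longleftrightarrow> j \<in> {1..l} \<and> x dvd k j"
  by (simp add: Jset_def)

lemma M_pos: "x \<in> M \<Longrightarrow> 0 < x" by (simp add: Mdef)

lemma card_J_ge: "x \<in> M \<Longrightarrow> 1 \<le> card (Jset l k x)"
  using odd_pos by (force simp: Mdef)

lemma main_up: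
  assumes q: "q = 1 \<or> prime q" and vM: "v \<in> M"
  shows "(\<forall>w\<in>M. multiplicity q w = multiplicity q v \<longrightarrow> w dvd v) \<or>
         (\<exists>u\<in>M. multiplicity q u = multiplicity q v \<and>
            (\<exists>p e. prime p \<and> p \<noteq> q \<and> 1 \<le> e \<and> u = v * p ^ e))"
proof -
  define t where "t = card (Jset l k v)"
  have vpos: "v > 0" using vM M_pos by blast
  have todd: "odd t" using vM by (simp add: Mdef t_def)
  have t1: "1 \<le> t" using card_J_ge[OF vM] by (simp add: t_def)
  have tl: "t \<le> l" using J_le by (simp add: t_def)
  have Jv: "\<And>j. j \<in> Jset l k v \<longleftrightarrow> 1 \<le> j \<and> j \<le> t" using J_mem by (simp add: t_def)
  have kpos': "\<And>j. 1 \<le> j \<Longrightarrow> j \<le> l \<Longrightarrow> k j > 0" using kpos by auto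
  have vkt: "v dvd k t" using Jv[of t] t1 by (simp add: J_dvd)
  show ?thesis
  proof (cases "\<exists>p. prime p \<and> p \<noteq> q \<and> multiplicity p v < multiplicity p (k t)")
    case True
    then obtain p where p: "prime p" "p \<noteq> q" "multiplicity p v < multiplicity p (k t)" by blast
    define u where "u = v * p ^ 1"
    have upos: "u > 0" using vpos p by (simp add: u_def prime_gt_0_nat)
    have "u dvd k t"
    proof (subst mult_dvd_iff)
      show "u > 0" by fact
      show "k t > 0" using kpos' t1 tl by simp
      show "\<forall>r. prime r \<longrightarrow> multiplicity r u \<le> multiplicity r (k t)"
      proof (intro allI impI)
        fix r :: nat assume r: "prime r"
        have "multiplicity r v \<le> multiplicity r (k t)"
          using vkt kpos' t1 tl by (auto intro!: dvd_imp_multiplicity_le)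
        moreover have "multiplicity r u = multiplicity r v + (if r = p then 1 else 0)"
          using mult_times_pow[OF vpos p(1) r, of 1] by (simp add: u_def)
        ultimately show "multiplicity r u \<le> multiplicity r (k t)"
          using p by auto
      qed
    qed
    have "Jset l k u = Jset l k v"
    proof
      show "Jset l k u \<subseteq> Jset l k v"
      proof
        fix j assume "j \<in> Jset l k u"
        then have "j \<in> {1..l}" "u dvd k j" by (auto simp: J_dvd)
        moreover have "v dvd u" by (simp add: u_def)
        ultimately show "j \<in> Jset l k v" by (simp add: J_dvd dvd_trans[of v u])
      qed
      show "Jset l k v \<subseteq> Jset l k u"
      proof
        fix j assume "j \<in> Jset l k v"
        then have "1 \<le> j" "j \<le> t" using Jv by auto
        then have "k t dvd k j" using chain_dvd tl by simp
        then have "u dvd k j" using \<open>u dvd k t\<close> by (rule dvd_trans[rotated])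
        then show "j \<in> Jset l k u" using \<open>1 \<le> j\<close> \<open>j \<le> t\<close> tl
          by (auto simp: J_dvd)
      qed
    qed
    then have "u \<in> M" using upos todd by (simp add: Mdef t_def)
    moreover have "multiplicity q u = multiplicity q v"
      unfolding u_def by (rule mult_q_times_pow) (use vpos p q in auto)
    ultimately show ?thesis using p unfolding u_def by blast
  next
    case notc1: False
    show ?thesis
    proof (cases "\<exists>j p. odd j \<and> 1 \<le> j \<and> j < t \<and> prime p \<and> p \<noteq> q \<and>
                    multiplicity p (k (Suc j)) < multiplicity p (k j)")
      case True
      then obtain j p where jp: "odd j" "1 \<le> j" "j < t" "prime p" "p \<noteq> q"
        "multiplicity p (k (Suc j)) < multiplicity p (k j)" by blast
      have vkj1: "v dvd k (Suc j)" using Jv[of "Suc j"] jp by (simp add: J_dvd)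
      have vkj: "v dvd k j" using Jv[of j] jp by (simp add: J_dvd)
      have kj1pos: "k (Suc j) > 0" "k j > 0" using kpos' jp tl by auto
      have le1: "multiplicity p v \<le> multiplicity p (k (Suc j))"
        using vkj1 kj1pos by (auto intro!: dvd_imp_multiplicity_le)
      define e where "e = multiplicity p (k j) - multiplicity p v"
      define u where "u = v * p ^ e"
      have e1: "1 \<le> e" using le1 jp by (simp add: e_def)
      have upos: "u > 0" using vpos jp by (simp add: u_def prime_gt_0_nat)
      have mu: "\<And>r. prime r \<Longrightarrow> multiplicity r u = multiplicity r v + (if r = p then e else 0)"
        using vpos jp by (simp add: u_def mult_times_pow)
      have ukj: "u dvd k j"
      proof (subst mult_dvd_iff)
        show "u > 0" by fact
        show "k j > 0" by fact
        show "\<forall>r. prime r \<longrightarrow> multiplicity r u \<le> multiplicity r (k j)"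
        proof (intro allI impI)
          fix r :: nat assume r: "prime r"
          have "multiplicity r v \<le> multiplicity r (k j)"
            using vkj kj1pos by (auto intro!: dvd_imp_multiplicity_le)
          then show "multiplicity r u \<le> multiplicity r (k j)"
            using mu[OF r] le1 jp by (auto simp: e_def)
        qed
      qed
      have nukj1: "\<not> u dvd k (Suc j)"
      proof
        assume "u dvd k (Suc j)"
        then have "multiplicity p u \<le> multiplicity p (k (Suc j))"
          using kj1pos by (auto intro!: dvd_imp_multiplicity_le)
        then show False using mu[OF jp(4)] le1 jp by (simp add: e_def)
      qed
      have Ju: "Jset l k u = {1..j}"
      proof
        show "Jset l k u \<subseteq> {1..j}"
        proof
          fix i assume i: "i \<in> Jset l k u"
          have "i \<le> j"
          proof (rule ccontr)
            assume "\<not> i \<le> j"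
            then have "k i dvd k (Suc j)" using i chain_dvd[of "Suc j" i] by (simp add: J_dvd)
            moreover have "u dvd k i" using i by (simp add: J_dvd)
            ultimately have "u dvd k (Suc j)" by (rule dvd_trans[rotated])
            then show False using nukj1 by simp
          qed
          then show "i \<in> {1..j}" using i by (simp add: J_dvd)
        qed
        show "{1..j} \<subseteq> Jset l k u"
        proof
          fix i assume i: "i \<in> {1..j}"
          then have "k j dvd k i" using chain_dvd[of i j] jp tl by simp
          then have "u dvd k i" using ukj by (rule dvd_trans[rotated])
          then show "i \<in> Jset l k u" using i jp tl by (auto simp: J_dvd)
        qed
      qed
      have "u \<in> M" using upos jp Ju by (simp add: Mdef)
      moreover have "multiplicity q u = multiplicity q v"
        unfolding u_def by (rule mult_q_times_pow) (use vpos jp q in auto)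
      ultimately show ?thesis using jp e1 unfolding u_def by blast
    next
      case notc2: False
      have "\<forall>w\<in>M. multiplicity q w = multiplicity q v \<longrightarrow> w dvd v"
      proof (intro ballI impI)
        fix w assume wM: "w \<in> M" and mq: "multiplicity q w = multiplicity q v"
        define t' where "t' = card (Jset l k w)"
        have wpos: "w > 0" using wM M_pos by blast
        have t'odd: "odd t'" using wM by (simp add: Mdef t'_def)
        have t'1: "1 \<le> t'" using card_J_ge[OF wM] by (simp add: t'_def)
        have Jw: "\<And>j. j \<in> Jset l k w \<longleftrightarrow> 1 \<le> j \<and> j \<le> t'" using J_mem by (simp add: t'_def)
        have kvq: "multiplicity q v \<le> multiplicity q (k t)"
          using vkt kpos' t1 tl by (auto intro!: dvd_imp_multiplicity_le)
        have "t \<le> t'"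
        proof (rule ccontr)
          assume "\<not> t \<le> t'"
          then have lt: "t' < t" by simp
          have wkt': "w dvd k t'" using Jw[of t'] t'1 by (simp add: J_dvd)
          have "w dvd k (Suc t')"
          proof (subst mult_dvd_iff)
            show "w > 0" by fact
            show "k (Suc t') > 0" using kpos' lt tl by simp
            show "\<forall>r. prime r \<longrightarrow> multiplicity r w \<le> multiplicity r (k (Suc t'))"
            proof (intro allI impI)
              fix r :: nat assume r: "prime r"
              show "multiplicity r w \<le> multiplicity r (k (Suc t'))"
              proof (cases "r = q")
                case True
                have "k t dvd k (Suc t')" using chain_dvd[of "Suc t'" t] lt tl by simp
                then have "multiplicity q (k t) \<le> multiplicity q (k (Suc t'))"
                  using kpos' lt tl by (auto intro!: dvd_imp_multiplicity_le)
                then show ?thesis using True mq kvq by simp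
              next
                case False
                have "multiplicity r w \<le> multiplicity r (k t')"
                  using wkt' kpos' t'1 lt tl by (auto intro!: dvd_imp_multiplicity_le)
                moreover have "multiplicity r (k t') \<le> multiplicity r (k (Suc t'))"
                  using notc2 t'odd t'1 lt r False by (meson not_le)
                ultimately show ?thesis by simp
              qed
            qed
          qed
          then have "Suc t' \<in> Jset l k w" using lt tl by (simp add: J_dvd)
          then show False using Jw by simp
        qed
        then have wkt: "w dvd k t" using Jw[of t] t1 by (simp add: J_dvd)
        show "w dvd v"
        proof (subst mult_dvd_iff)
          show "w > 0" "v > 0" by fact+
          show "\<forall>r. prime r \<longrightarrow> multiplicity r w \<le> multiplicity r v"
          proof (intro allI impI)
            fix r :: nat assume r: "prime r"
            show "multiplicity r w \<le> multiplicity r v"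
            proof (cases "r = q")
              case True then show ?thesis using mq by simp
            next
              case False
              have "multiplicity r w \<le> multiplicity r (k t)"
                using wkt kpos' t1 tl by (auto intro!: dvd_imp_multiplicity_le)
              moreover have "multiplicity r (k t) \<le> multiplicity r v"
                using notc1 r False by (meson not_le)
              ultimately show ?thesis by simp
            qed
          qed
        qed
      qed
      then show ?thesis by blast
    qed
  qed
qed

lemma reach_top:
  assumes q: "q = 1 \<or> prime q" and fin: "finite M"
    and vL: "v \<in> {w\<in>M. multiplicity q w = a}"
  shows "(\<lambda>x y. \<exists>p. prime p \<and> p \<noteq> q \<and> pedge M p x y)\<^sup>*\<^sup>* (Max {w\<in>M. multiplicity q w = a}) v"
proof -
  define L where "L = {w\<in>M. multiplicity q w = a}"
  define T where "T = Max L"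
  define R where "R = (\<lambda>x y. \<exists>p. prime p \<and> p \<noteq> q \<and> pedge M p x y)"
  have finL: "finite L" using fin by (simp add: L_def)
  have "L \<noteq> {}" using vL by (auto simp: L_def)
  then have TL: "T \<in> L" using finL by (simp add: T_def)
  have Tge: "\<And>y. y \<in> L \<Longrightarrow> y \<le> T" using finL by (simp add: T_def)
  have "\<forall>v. v \<in> L \<longrightarrow> T - v = n \<longrightarrow> R\<^sup>*\<^sup>* T v" for n
  proof (induction n rule: less_induct)
    case (less n)
    show ?case
    proof (intro allI impI)
      fix v assume vL: "v \<in> L" and n: "T - v = n"
      have vM: "v \<in> M" and mv: "multiplicity q v = a" using vL by (auto simp: L_def)
      have vpos: "v > 0" using vM M_pos by blast
      from main_up[OF q vM]
      show "R\<^sup>*\<^sup>* T v"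
      proof
        assume "\<forall>w\<in>M. multiplicity q w = multiplicity q v \<longrightarrow> w dvd v"
        then have "T dvd v" using TL mv by (auto simp: L_def)
        then have "T \<le> v" using vpos by (simp add: dvd_imp_le)
        then have "T = v" using Tge[OF vL] by simp
        then show ?thesis by simp
      next
        assume "\<exists>u\<in>M. multiplicity q u = multiplicity q v \<and>
            (\<exists>p e. prime p \<and> p \<noteq> q \<and> 1 \<le> e \<and> u = v * p ^ e)"
        then obtain u p e where u: "u \<in> M" "prime p" "p \<noteq> q" "1 \<le> e" "u = v * p ^ e" by blast
        obtain w f where w: "w \<in> M" "1 \<le> f" "w = v * p ^ f" "pedge M p w v"
          using edge_exists[OF fin vM u(1) vpos u(2) u(4) u(5)] by blast
        have "multiplicity q w = multiplicity q v"
          using w(3) mult_q_times_pow[OF vpos u(2) q u(3)] by simp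
        then have wL: "w \<in> L" using w mv by (simp add: L_def)
        have "1 < p ^ f" using u(2) w(2) by (rule ppow_gt1)
        then have "v < w" using w(3) vpos by simp
        then have "T - w < n" using Tge[OF wL] n by simp
        then have "R\<^sup>*\<^sup>* T w" using less wL by blast
        moreover have "R w v" using w u by (auto simp: R_def)
        ultimately show ?thesis by (rule rtranclp.rtrancl_into_rtrancl)
      qed
    qed
  qed
  then show ?thesis using vL by (simp add: L_def[symmetric] T_def[symmetric] R_def[symmetric])
qed

lemma J_one: "Jset l k 1 = {1..l}" by (auto simp: Jset_def)

lemma J_cop: "coprime a b \<Longrightarrow> Jset l k (a * b) = Jset l k a \<inter> Jset l k b"
  by (auto simp: Jset_def intro: divides_mult dvd_mult_left dvd_mult_right)

lemma card_J_cop: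
  assumes "coprime a b"
  shows "card (Jset l k (a * b)) = min (card (Jset l k a)) (card (Jset l k b))"
proof -
  have "Jset l k (a * b) = {1..card (Jset l k a)} \<inter> {1..card (Jset l k b)}"
    using J_cop[OF assms] J_seg[of a] J_seg[of b] by simp
  also have "\<dots> = {1..min (card (Jset l k a)) (card (Jset l k b))}" by auto
  finally show ?thesis by simp
qed

lemma part1:
  assumes fin: "finite M" and ne: "M \<noteq> {}"
  shows "\<exists>m1\<in>M. (\<forall>m\<in>M. m \<le> m1) \<and> (\<forall>v\<in>M. (edge M)\<^sup>*\<^sup>* m1 v)"
proof -
  have L: "{w\<in>M. multiplicity 1 w = 0} = M" by (simp add: multiplicity_unit_left)
  have "Max M \<in> M" using fin ne by simp
  moreover have "\<forall>m\<in>M. m \<le> Max M" using fin by simp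
  moreover have "\<forall>v\<in>M. (edge M)\<^sup>*\<^sup>* (Max M) v"
  proof
    fix v assume "v \<in> M"
    then have "(\<lambda>x y. \<exists>p. prime p \<and> p \<noteq> 1 \<and> pedge M p x y)\<^sup>*\<^sup>* (Max M) v"
      using reach_top[of 1 v 0] fin by (simp add: multiplicity_unit_left)
    then show "(edge M)\<^sup>*\<^sup>* (Max M) v"
      by (rule mono_rtranclp[rule_format, rotated]) (auto simp: edge_def)
  qed
  ultimately show ?thesis by blast
qed

lemma mult2_lev:
  fixes os :: nat assumes "odd os"
  shows "multiplicity 2 (2 ^ a * os) = a"
proof -
  have "os > 0" using assms by (simp add: odd_pos)
  then have "multiplicity 2 (2 ^ a * os) = multiplicity 2 ((2::nat) ^ a) + multiplicity 2 os"
    by (intro prime_elem_multiplicity_mult_distrib) auto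
  moreover have "multiplicity 2 os = 0" using assms by (simp add: not_dvd_imp_multiplicity_0)
  ultimately show ?thesis by simp
qed

lemma cop2: "odd (o'::nat) \<Longrightarrow> coprime (2 ^ a) o'"
  by (simp add: coprime_power_left_iff prime_imp_coprime)

lemma part2:
  assumes fin: "finite M" and ne: "M \<noteq> {}"
  shows "\<exists>xs. p_path M 2 xs \<and> (\<forall>P\<in>planes M 2. set xs \<inter> P \<noteq> {})"
proof -
  define c where "c x = card (Jset l k x)" for x
  define O' where "O' = {z. z = (1::nat) \<or> (odd z \<and> odd (c z))}"
  obtain os where os: "os \<in> O'" "\<And>y. y \<in> O' \<Longrightarrow> c os \<le> c y"
    using ex_has_least_nat[of "\<lambda>z. z \<in> O'" 1 c] by (auto simp: O'_def)
  have osodd: "odd os" using os(1) by (auto simp: O'_def)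
  have c1: "c 1 = l" using J_one by (simp add: c_def)
  have cle: "\<And>x. c x \<le> l" using J_le by (simp add: c_def)
  have lev: "2 ^ multiplicity 2 w * os \<in> M" if wM: "w \<in> M" for w
  proof -
    define a where "a = multiplicity 2 w"
    obtain o' where o': "w = 2 ^ a * o'" "\<not> 2 dvd o'"
    proof -
      have "w \<noteq> 0" using M_pos[OF wM] by simp
      then show ?thesis using multiplicity_decompose'[of w 2] that unfolding a_def by auto
    qed
    have cw: "c w = min (c (2 ^ a)) (c o')"
      using card_J_cop[OF cop2[of o' a]] o' by (simp add: c_def)
    have cwodd: "odd (c w)" using wM by (simp add: Mdef c_def)
    have cos: "c (2 ^ a * os) = min (c (2 ^ a)) (c os)"
      using card_J_cop[OF cop2[OF osodd, of a]] by (simp add: c_def)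
    have "odd (min (c (2 ^ a)) (c os))"
    proof (cases "odd (c (2 ^ a))")
      case True
      show ?thesis
      proof (cases "odd (c os)")
        case True then show ?thesis using \<open>odd (c (2 ^ a))\<close> by (simp add: min_def)
      next
        case False
        then have "os = 1" using os(1) by (auto simp: O'_def)
        then have "c os = l" using c1 by simp
        then have "min (c (2 ^ a)) (c os) = c (2 ^ a)" using cle by (simp add: min_def)
        then show ?thesis using True by simp
      qed
    next
      case False
      then have lt: "c o' < c (2 ^ a)" and oo: "odd (c o')" using cw cwodd by (auto simp: min_def split: if_splits)
      have "odd o'" using o' by simp
      then have "o' \<in> O'" using oo by (simp add: O'_def)
      then have le: "c os \<le> c o'" by (rule os(2))
      have "odd (c os)"
      proof (cases "os = 1")
        case True
        then have "c os = l" using c1 by simp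
        then have "c os = c o'" using le cle[of o'] by simp
        then show ?thesis using oo by simp
      next
        case False then show ?thesis using os(1) by (auto simp: O'_def)
      qed
      moreover have "min (c (2 ^ a)) (c os) = c os" using le lt by simp
      ultimately show ?thesis by simp
    qed
    moreover have "0 < 2 ^ a * os" using osodd by (simp add: odd_pos)
    ultimately show ?thesis using cos by (simp add: Mdef c_def a_def)
  qed
  define B where "B = {x\<in>M. \<exists>e. x = 2 ^ e * os}"
  have finB: "finite B" using fin by (simp add: B_def)
  obtain ys where ys: "sorted_wrt (<) ys" "set ys = B"
    using finite_set_strict_sorted[OF finB] by blast
  define xs where "xs = rev ys"
  have xsB: "set xs = B" using ys by (simp add: xs_def)
  have xsdec: "sorted_wrt (>) xs" using ys by (simp add: xs_def sorted_wrt_rev)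
  have BM: "B \<subseteq> M" by (auto simp: B_def)
  obtain w0 where "w0 \<in> M" using ne by blast
  then have "2 ^ multiplicity 2 w0 * os \<in> B" using lev by (auto simp: B_def)
  then have xsne: "xs \<noteq> []" using xsB by auto
  have Mpos: "\<forall>m\<in>M. 0 < m" using M_pos by blast
  have pp: "p_path M 2 xs"
    unfolding p_path_def
  proof (intro conjI allI impI)
    show "xs \<noteq> []" by fact
    show "set xs \<subseteq> M" using xsB BM by simp
    fix i assume i: "Suc i < length xs"
    define X where "X = xs ! i"
    define Y where "Y = xs ! Suc i"
    have XB: "X \<in> B" using i xsB by (auto simp: X_def)
    have YB: "Y \<in> B" using i xsB by (auto simp: Y_def)
    have YX: "Y < X" using sorted_wrt_nth_less[OF xsdec, of i "Suc i"] i by (simp add: X_def Y_def)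
    obtain a where a: "X = 2 ^ a * os" using XB by (auto simp: B_def)
    obtain b where b: "Y = 2 ^ b * os" using YB by (auto simp: B_def)
    have "b < a"
    proof (rule ccontr)
      assume "\<not> b < a"
      then have "(2::nat) ^ a \<le> 2 ^ b" by (simp add: power_increasing)
      then have "X \<le> Y" using a b by simp
      then show False using YX by simp
    qed
    then have XY: "X = Y * 2 ^ (a - b)" using a b by (simp add: power_add[symmetric])
    have Ypos: "Y > 0" using YB BM Mpos by auto
    show "pedge M 2 (xs ! i) (xs ! Suc i)"
      unfolding X_def[symmetric] Y_def[symmetric] pedge_def
    proof (intro conjI)
      show "X \<in> M" "Y \<in> M" using XB YB BM by auto
      show "prime (2::nat)" by simp
      show "\<exists>e\<ge>1. X = Y * 2 ^ e" using XY \<open>b < a\<close> by (intro exI[of _ "a - b"]) simp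
      show "\<not> (\<exists>m3\<in>M - {X, Y}. Y dvd m3 \<and> m3 dvd X)"
      proof
        assume "\<exists>m3\<in>M - {X, Y}. Y dvd m3 \<and> m3 dvd X"
        then obtain m3 where m3: "m3 \<in> M" "m3 \<noteq> X" "m3 \<noteq> Y" "Y dvd m3" "m3 dvd X" by blast
        obtain d where d: "m3 = Y * d" using m3 by blast
        have "d dvd 2 ^ (a - b)" using m3(5) d XY Ypos by simp
        then obtain g where g: "d = 2 ^ g" using divides_primepow_nat[of 2 d "a - b"] by auto
        have "m3 = 2 ^ (b + g) * os" using d g b by (simp add: power_add)
        then have "m3 \<in> set xs" using m3(1) xsB by (auto simp: B_def)
        moreover have "Y < m3"
        proof -
          have "m3 > 0" using m3(1) Mpos by auto
          then have "Y \<le> m3" using m3(4) by (simp add: dvd_imp_le)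
          then show ?thesis using m3(3) by simp
        qed
        moreover have "m3 < X"
        proof -
          have "X > 0" using YX by simp
          then show ?thesis using m3 dvd_imp_le[of m3 X] by simp
        qed
        ultimately show False using sorted_gap[OF xsdec i] by (simp add: X_def Y_def)
      qed
    qed
  qed
  have "\<forall>P\<in>planes M 2. set xs \<inter> P \<noteq> {}"
  proof
    fix P assume "P \<in> planes M 2"
    then obtain w where wM: "w \<in> M" and P: "P = {b. same_plane M 2 w b}" by (auto simp: planes_def)
    define a where "a = multiplicity 2 w"
    define x where "x = 2 ^ a * os"
    have xM: "x \<in> M" using lev[OF wM] by (simp add: x_def a_def)
    have xB: "x \<in> set xs" using xM xsB by (auto simp: B_def x_def)
    have q2: "(2::nat) = 1 \<or> prime (2::nat)" by simp
    define T where "T = Max {w\<in>M. multiplicity 2 w = a}"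
    define R where "R = (\<lambda>x y. \<exists>p. prime p \<and> p \<noteq> (2::nat) \<and> pedge M p x y)"
    define U where "U = (\<lambda>x y. non_p_edge M 2 x y \<or> non_p_edge M 2 y x)"
    have RU: "\<And>x y. R x y \<Longrightarrow> U x y" using R_non2 Mpos by (auto simp: R_def U_def)
    have "R\<^sup>*\<^sup>* T w" unfolding R_def T_def using reach_top[OF q2 fin, of w a] wM by (simp add: a_def)
    then have Tw: "U\<^sup>*\<^sup>* T w" by (rule mono_rtranclp[rule_format, rotated]) (use RU in auto)
    have "R\<^sup>*\<^sup>* T x" unfolding R_def T_def using reach_top[OF q2 fin, of x a] xM
      by (simp add: x_def mult2_lev[OF osodd])
    then have Tx: "U\<^sup>*\<^sup>* T x" by (rule mono_rtranclp[rule_format, rotated]) (use RU in auto)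
    have "U\<^sup>*\<^sup>* w T" by (rule rtranclp_sym[OF _ Tw]) (auto simp: U_def)
    then have "U\<^sup>*\<^sup>* w x" using Tx by (rule rtranclp_trans)
    then have "same_plane M 2 w x" using wM xM by (simp add: same_plane_def U_def)
    then show "set xs \<inter> P \<noteq> {}" using xB P by auto
  qed
  then show ?thesis using pp by blast
qed

end


lemma exp_int_iff: "exp (complex_of_real (2 * pi * r) * \<i>) = 1 \<longleftrightarrow> (\<exists>n::int. r = of_int n)"
proof -
  have "exp (complex_of_real (2 * pi * r) * \<i>) = 1 \<longleftrightarrow> (\<exists>n::int. 2 * pi * r = of_int (2 * n) * pi)"
    by (simp add: exp_eq_1)
  also have "\<dots> \<longleftrightarrow> (\<exists>n::int. r = of_int n)"
    by (intro ex_cong1) (auto simp: field_simps)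
  finally show ?thesis .
qed

lemma real_div_int_iff:
  assumes "x > 0"
  shows "(\<exists>n::int. real_of_int d / real x = of_int n) \<longleftrightarrow> int x dvd d"
proof
  assume "\<exists>n::int. real_of_int d / real x = of_int n"
  then obtain n :: int where "real_of_int d / real x = of_int n" by blast
  then have "real_of_int d = of_int n * real x" using assms by (simp add: field_simps)
  then have "d = n * int x" by (metis of_int_eq_iff of_int_mult of_int_of_nat_eq)
  then show "int x dvd d" by simp
next
  assume "int x dvd d"
  then obtain n where "d = int x * n" by (auto elim: dvdE)
  then have "real_of_int d / real x = of_int n" using assms by simp
  then show "\<exists>n::int. real_of_int d / real x = of_int n" by blast
qed

lemma root_pow:
  assumes "x > 0"
  shows "exp (2 * pi * \<i> / of_nat x) ^ d = 1 \<longleftrightarrow> x dvd d"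
proof -
  have "exp (2 * pi * \<i> / of_nat x) ^ d = exp (of_nat d * (2 * pi * \<i> / of_nat x))"
    by (rule exp_of_nat_mult[symmetric])
  also have "of_nat d * (2 * pi * \<i> / of_nat x) = complex_of_real (2 * pi * (real_of_int (int d) / real x)) * \<i>"
    by simp
  finally have "exp (2 * pi * \<i> / of_nat x) ^ d = 1 \<longleftrightarrow> (\<exists>n::int. real_of_int (int d) / real x = of_int n)"
    by (simp only: exp_int_iff)
  also have "\<dots> \<longleftrightarrow> int x dvd int d" by (rule real_div_int_iff[OF assms])
  finally show ?thesis by simp
qed

lemma has_order_root:
  assumes "x > 0"
  shows "has_order (exp (2 * pi * \<i> / of_nat x)) m \<longleftrightarrow> m = x"
proof
  assume h: "has_order (exp (2 * pi * \<i> / of_nat x)) m"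
  then have "x dvd m" "m > 0" using root_pow[OF assms] by (auto simp: has_order_def)
  then have "x \<le> m" by (simp add: dvd_imp_le)
  moreover have "\<not> x < m" using h root_pow[OF assms, of x] assms by (auto simp: has_order_def)
  ultimately show "m = x" by simp
next
  assume "m = x"
  then show "has_order (exp (2 * pi * \<i> / of_nat x)) m"
    using root_pow[OF assms] assms by (auto simp: has_order_def dest: dvd_imp_le)
qed

lemma lam_eq:
  assumes k: "k > 0" and x: "x > 0"
  shows "exp (2 * pi * \<i> / of_nat x) = exp (2 * pi * \<i> * of_nat a / of_nat k) \<longleftrightarrow>
    int k * int x dvd int a * int x - int k"
proof -
  have "exp (2 * pi * \<i> / of_nat x) = exp (2 * pi * \<i> * of_nat a / of_nat k) \<longleftrightarrow>
      exp (2 * pi * \<i> * of_nat a / of_nat k - 2 * pi * \<i> / of_nat x) = 1"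
    by (auto simp: exp_diff)
  also have "2 * pi * \<i> * of_nat a / of_nat k - 2 * pi * \<i> / of_nat x =
      complex_of_real (2 * pi * (real_of_int (int a * int x - int k) / real (k * x))) * \<i>"
    using k x by (simp add: field_simps)
  also have "exp \<dots> = 1 \<longleftrightarrow> (\<exists>n::int. real_of_int (int a * int x - int k) / real (k * x) = of_int n)"
    by (rule exp_int_iff)
  also have "\<dots> \<longleftrightarrow> int (k * x) dvd (int a * int x - int k)"
    by (rule real_div_int_iff) (use k x in simp)
  finally show ?thesis by simp
qed

lemma lam_cases:
  assumes k: "k > 0" and x: "x > 0" and a: "a < k"
  shows "exp (2 * pi * \<i> / of_nat x) = exp (2 * pi * \<i> * of_nat a / of_nat k) \<longleftrightarrow>
    x dvd k \<and> a = (k div x) mod k"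
proof -
  define D where "D a = (int k * int x dvd int a * int x - int k)" for a
  have uniq: "a1 = a2" if "D a1" "D a2" "a1 < k" "a2 < k" for a1 a2
  proof -
    have "int k * int x dvd (int a1 * int x - int k) - (int a2 * int x - int k)"
      using that(1,2) unfolding D_def by (rule dvd_diff)
    then have "int k * int x dvd (int a1 - int a2) * int x" by (simp add: algebra_simps)
    then have dv: "int k dvd int a1 - int a2" using x by simp
    show ?thesis
    proof (rule ccontr)
      assume "a1 \<noteq> a2"
      then have "int a1 - int a2 \<noteq> 0" by simp
      from dvd_imp_le_int[OF this dv] that(3,4) show False by simp
    qed
  qed
  have dk: "x dvd k" if "D a" for a
  proof -
    have "int x dvd int a * int x - int k"
      using dvd_trans[OF dvd_triv_right that[unfolded D_def]] .
    then have "int x dvd int a * int x - (int a * int x - int k)"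
      by (rule dvd_diff[OF dvd_triv_right])
    then show ?thesis by simp
  qed
  have ex: "D ((k div x) mod k)" if xk: "x dvd k"
  proof -
    obtain m where m: "k = x * m" using xk by (rule dvdE)
    have mpos: "m > 0" using k m by simp
    show ?thesis
    proof (cases "x = 1")
      case True
      then show ?thesis using m by (simp add: D_def)
    next
      case False
      then have "m < k" using m mpos x by simp
      then have "(k div x) mod k = m" using m x by simp
      then show ?thesis unfolding D_def by (simp add: m mult.commute)
    qed
  qed
  have "exp (2 * pi * \<i> / of_nat x) = exp (2 * pi * \<i> * of_nat a / of_nat k) \<longleftrightarrow> D a"
    unfolding D_def by (rule lam_eq[OF k x])
  also have "\<dots> \<longleftrightarrow> x dvd k \<and> a = (k div x) mod k"
  proof
    assume "D a"
    then have "x dvd k" by (rule dk)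
    moreover have "a = (k div x) mod k"
      by (rule uniq[OF \<open>D a\<close> ex[OF \<open>x dvd k\<close>] a]) (use k in simp)
    ultimately show "x dvd k \<and> a = (k div x) mod k" by simp
  next
    assume "x dvd k \<and> a = (k div x) mod k"
    then show "D a" using ex by simp
  qed
  finally show ?thesis .
qed

lemma Lambda_root:
  assumes k: "k > 0" and x: "x > 0"
  shows "Lambda k (exp (2 * pi * \<i> / of_nat x)) = (if x dvd k then 1 else 0)"
proof -
  have "Lambda k (exp (2 * pi * \<i> / of_nat x)) =
      (\<Sum>a<k. if a = (k div x) mod k then (if x dvd k then 1 else 0) else 0)"
    unfolding Lambda_def grp_elem_def
    by (intro sum.cong refl) (use lam_cases[OF k x] in auto)
  also have "\<dots> = (if x dvd k then 1 else 0)" using k by simp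
  finally show ?thesis .
qed

lemma Psi_root:
  assumes "finite M" "\<forall>m\<in>M. 0 < m" "x > 0"
  shows "(\<Sum>m\<in>M. Psi m (exp (2 * pi * \<i> / of_nat x))) = (if x \<in> M then 1 else 0)"
proof -
  have "(\<Sum>m\<in>M. Psi m (exp (2 * pi * \<i> / of_nat x))) = (\<Sum>m\<in>M. if m = x then 1 else 0)"
    unfolding Psi_def by (intro sum.cong refl) (use has_order_root[OF assms(3)] in auto)
  also have "\<dots> = (if x \<in> M then 1 else 0)" using assms(1) by simp
  finally show ?thesis .
qed

lemma alt_sum: "(\<Sum>j=1..t. (-1::rat) ^ (j - 1)) = (if odd t then 1 else 0)"
  by (induction t) (auto simp: power_Suc)


theorem lemma6p8:
  fixes l :: nat and k :: "nat \<Rightarrow> nat" and M :: "nat set"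
  assumes "\<forall>j\<in>{1..l}. 0 < k j"
    and "\<forall>j\<in>{2..l}. k j dvd k (j - 1)"
    and "finite M" and "\<forall>m\<in>M. 0 < m"
    and "(\<lambda>z. \<Sum>j=1..l. (-1) ^ (j - 1) * Lambda (k j) z) = (\<lambda>z. \<Sum>m\<in>M. Psi m z)"
  shows "M = {} \<or>
    ((\<exists>m1\<in>M. (\<forall>m\<in>M. m \<le> m1) \<and> (\<forall>v\<in>M. (edge M)\<^sup>*\<^sup>* m1 v)) \<and>
     (\<exists>xs. p_path M 2 xs \<and> (\<forall>P\<in>planes M 2. set xs \<inter> P \<noteq> {})))"
proof -
  interpret K0: kchain l k "{x. 0 < x \<and> odd (card (Jset l k x))}"
    using assms(1,2) by unfold_locales auto
  have key: "x \<in> M \<longleftrightarrow> odd (card (Jset l k x))" if x: "x > 0" for x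
  proof -
    define z where "z = exp (2 * pi * \<i> / of_nat x)"
    have "(\<Sum>j=1..l. (-1) ^ (j - 1) * Lambda (k j) z) = (\<Sum>m\<in>M. Psi m z)"
      using fun_cong[OF assms(5), of z] .
    also have "(\<Sum>m\<in>M. Psi m z) = (if x \<in> M then 1 else 0)"
      unfolding z_def by (rule Psi_root[OF assms(3,4) x])
    also have "(\<Sum>j=1..l. (-1) ^ (j - 1) * Lambda (k j) z) =
        (\<Sum>j\<in>{1..l}. if j \<in> {j. x dvd k j} then (-1) ^ (j - 1) else 0)"
      unfolding z_def by (intro sum.cong refl) (use assms(1) Lambda_root x in auto)
    also have "\<dots> = (\<Sum>j\<in>{1..l} \<inter> {j. x dvd k j}. (-1::rat) ^ (j - 1))"
      by (rule sum.inter_restrict[symmetric]) simp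
    also have "{1..l} \<inter> {j. x dvd k j} = Jset l k x"
      by (auto simp: Jset_def)
    also have "Jset l k x = {1..card (Jset l k x)}"
      by (rule K0.J_seg)
    also have "(\<Sum>j\<in>{1..card (Jset l k x)}. (-1::rat) ^ (j - 1)) =
        (if odd (card (Jset l k x)) then 1 else 0)" by (rule alt_sum)
    finally show ?thesis by (auto split: if_splits)
  qed
  have Mchar: "M = {x. 0 < x \<and> odd (card (Jset l k x))}"
    using key assms(4) by auto
  interpret K: kchain l k M
    using assms(1,2) Mchar by unfold_locales auto
  show ?thesis
  proof (cases "M = {}")
    case True then show ?thesis by simp
  next
    case False
    then show ?thesis using K.part1[OF assms(3) False] K.part2[OF assms(3) False] by blast
  qed
qed

end
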